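(* Fix $n\ge1$ and real coefficients $a^{\pm}_{i,j},b^{\pm}_{i,j}$ ($i+j\le n$), with $p^{\pm}=\sum_{i+j=0}^n a^{\pm}_{i,j}x^iy^j$, $q^{\pm}=\sum_{i+j=0}^n b^{\pm}_{i,j}x^iy^j$. Then there exist real polynomials $\alpha(h),\beta(h),\gamma(h)$ with $\deg\alpha\le\left[\frac n2\right]$, $\deg\gamma\le\left[\frac n2\right]$, $\deg\beta\le\left[\frac n2\right]-1$, real polynomials $\Psi_{k,m}(h)$ ($2\le k\le n$, $0\le m\le 3[\frac k2]-3$) with $\deg\Psi_{k,m}\le\left[\frac k2\right]-1-\left[\frac{m+2}{3}\right]$, and a real polynomial $\Phi(u)$ of degree at most $3n+\frac{5+(-1)^n}{2}$, such that for all $h\in(0,+\infty)$ $$M(h)=\alpha(h)J_{0,0}(h)+\beta(h)J_{1,1}(h)+\gamma(h)J_{0,1}(h)+\sum_{k=2}^{n}\sum_{m=0}^{3[\frac k2]-3}\Psi_{k,m}(h)\,\sigma(h)^{7+2m}+\Phi(\sigma(h)).$$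
   Context: For $h>0$, $\sigma(h)$ denotes the unique positive solution $s$ of $s^2+s^6=h$; the circle $x^2+y^2=h$ meets $y=x^3$ exactly at $A_h=(-\sigma(h),-\sigma(h)^3)$ and $B_h=(\sigma(h),\sigma(h)^3)$. $L_h^+$ is the arc of the circle $x^2+y^2=h$ in $\{y\ge x^3\}$, oriented clockwise from $A_h$ to $B_h$; $L_h^-$ is the arc in $\{y\le x^3\}$, oriented clockwise from $B_h$ to $A_h$. $J_{i,j}(h)=\int_{L_h^+}x^iy^j\,dx$. The first order Melnikov function is $M(h)=\int_{L_h^+}(q^+dx-p^+dy)+\int_{L_h^-}(q^-dx-p^-dy)$. $[\cdot]$ denotes the integer part; a polynomial with negative degree bound is zero, and empty sums are zero. *)

theory Defs
  imports "HOL-Analysis.Analysis" "HOL-Computational_Algebra.Polynomial"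
begin

definition sigma :: "real \<Rightarrow> real" where
  "sigma h = (THE s. s > 0 \<and> s^2 + s^6 = h)"

definition bipoly :: "nat \<Rightarrow> (nat \<Rightarrow> nat \<Rightarrow> real) \<Rightarrow> real \<Rightarrow> real \<Rightarrow> real" where
  "bipoly n c x y = (\<Sum>(i,j)\<in>{(i,j). i + j \<le> n}. c i j * x ^ i * y ^ j)"

definition line_int ::
  "(real \<Rightarrow> real \<Rightarrow> real) \<Rightarrow> (real \<Rightarrow> real \<Rightarrow> real) \<Rightarrow> (real \<Rightarrow> real \<times> real) \<Rightarrow> real" where
  "line_int P Q g = integral {0..1}
     (\<lambda>t. P (fst (g t)) (snd (g t)) * fst (vector_derivative g (at t))
        + Q (fst (g t)) (snd (g t)) * snd (vector_derivative g (at t)))"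

text \<open>Polar angle of B_h = (s, s^3); A_h = -B_h has angle pi + this.
  The circle x^2+y^2=h has radius sqrt h.\<close>
definition angB :: "real \<Rightarrow> real" where
  "angB h = arctan ((sigma h)^2)"

text \<open>L_h^+: clockwise from A_h (angle pi + angB) to B_h (angle angB), through (0, sqrt h).\<close>
definition Lplus :: "real \<Rightarrow> real \<Rightarrow> real \<times> real" where
  "Lplus h t = (sqrt h * cos (pi + angB h - t * pi), sqrt h * sin (pi + angB h - t * pi))"

text \<open>L_h^-: clockwise from B_h (angle angB) to A_h (angle angB - pi), through (0, -sqrt h).\<close>
definition Lminus :: "real \<Rightarrow> real \<Rightarrow> real \<times> real" where
  "Lminus h t = (sqrt h * cos (angB h - t * pi), sqrt h * sin (angB h - t * pi))"

definition J :: "nat \<Rightarrow> nat \<Rightarrow> real \<Rightarrow> real" where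
  "J i j h = line_int (\<lambda>x y. x ^ i * y ^ j) (\<lambda>x y. 0) (Lplus h)"

definition melnikov ::
  "(real \<Rightarrow> real \<Rightarrow> real) \<Rightarrow> (real \<Rightarrow> real \<Rightarrow> real) \<Rightarrow>
   (real \<Rightarrow> real \<Rightarrow> real) \<Rightarrow> (real \<Rightarrow> real \<Rightarrow> real) \<Rightarrow> real \<Rightarrow> real" where
  "melnikov pp qp pm qm h =
     line_int qp (\<lambda>x y. - pp x y) (Lplus h) + line_int qm (\<lambda>x y. - pm x y) (Lminus h)"

text \<open>Degree bound allowing negative bounds (a polynomial with negative degree bound is 0).\<close>
definition deg_le :: "real poly \<Rightarrow> int \<Rightarrow> bool" where
  "deg_le p d \<longleftrightarrow> p = 0 \<or> int (degree p) \<le> d"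

end

theory Submission imports Defs begin

definition XX :: "real \<Rightarrow> real \<Rightarrow> real \<Rightarrow> real" where "XX c r t = r * cos (c - t * pi)"
definition YY :: "real \<Rightarrow> real \<Rightarrow> real \<Rightarrow> real" where "YY c r t = r * sin (c - t * pi)"
definition UU :: "real \<Rightarrow> real \<Rightarrow> nat \<Rightarrow> nat \<Rightarrow> real" where
  "UU c r a b = integral {0..1} (\<lambda>t. pi * XX c r t ^ a * YY c r t ^ b)"

lemma dXX: "((XX c r) has_real_derivative (pi * YY c r t)) (at t)"
  unfolding XX_def YY_def
  by (auto intro!: derivative_eq_intros)

lemma dYY: "((YY c r) has_real_derivative (- (pi * XX c r t))) (at t)"
  unfolding XX_def YY_def
  by (auto intro!: derivative_eq_intros)

lemma XY_sq: "XX c r t ^ 2 + YY c r t ^ 2 = r ^ 2"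
proof -
  have "XX c r t ^ 2 + YY c r t ^ 2 = r^2 * (sin (c - t*pi) ^ 2 + cos (c - t*pi) ^ 2)"
    unfolding XX_def YY_def by (simp only: power_mult_distrib distrib_left add.commute)
  then show ?thesis by simp
qed

lemma cont_XY: "continuous_on S (\<lambda>t. k * XX c r t ^ a * YY c r t ^ b)"
  unfolding XX_def YY_def by (intro continuous_intros)

lemma int_XY: "(\<lambda>t. k * XX c r t ^ a * YY c r t ^ b) integrable_on {0..1}"
  by (rule integrable_continuous_real, rule cont_XY)

lemma dXpYq: "((\<lambda>t. XX c r t ^ p * YY c r t ^ q) has_real_derivative
   (real p * XX c r t ^ (p - 1) * (pi * YY c r t) * YY c r t ^ q
    + XX c r t ^ p * (real q * YY c r t ^ (q - 1) * (- (pi * XX c r t))))) (at t)"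
  using DERIV_mult[OF DERIV_power[OF dXX[of c r t], of p] DERIV_power[OF dYY[of c r t], of q]] by (simp add: mult_ac)

lemma ftc_XY: "((\<lambda>t. real p * XX c r t ^ (p - 1) * (pi * YY c r t) * YY c r t ^ q
    + XX c r t ^ p * (real q * YY c r t ^ (q - 1) * (- (pi * XX c r t))))
   has_integral (XX c r 1 ^ p * YY c r 1 ^ q - XX c r 0 ^ p * YY c r 0 ^ q)) {0..1}"
  apply (rule fundamental_theorem_of_calculus[where f="\<lambda>t. XX c r t ^ p * YY c r t ^ q", simplified])
  apply simp
  apply (rule has_vector_derivative_at_within)
  using dXpYq has_real_derivative_iff_has_vector_derivative by blast

lemma UU_has: "((\<lambda>t. pi * XX c r t ^ a * YY c r t ^ b) has_integral UU c r a b) {0..1}"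
  unfolding UU_def using int_XY[of pi] by (simp add: integrable_integral)

lemma R1: "real (a+b+2) * UU c r a (b+2) - real (b+1) * r^2 * UU c r a b
   = XX c r 1 ^ (a+1) * YY c r 1 ^ (b+1) - XX c r 0 ^ (a+1) * YY c r 0 ^ (b+1)"
proof -
  have h1: "((\<lambda>t. real (a+b+2) * (pi * XX c r t ^ a * YY c r t ^ (b+2)) - real (b+1) * r^2 * (pi * XX c r t ^ a * YY c r t ^ b))
     has_integral (real (a+b+2) * UU c r a (b+2) - real (b+1) * r^2 * UU c r a b)) {0..1}"
    by (intro has_integral_diff has_integral_mult_right UU_has)
  have eq: "real (a+b+2) * (pi * XX c r t ^ a * YY c r t ^ (b+2)) - real (b+1) * r^2 * (pi * XX c r t ^ a * YY c r t ^ b)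
    = real (a+1) * XX c r t ^ (a+1 - 1) * (pi * YY c r t) * YY c r t ^ (b+1)
    + XX c r t ^ (a+1) * (real (b+1) * YY c r t ^ (b+1 - 1) * (- (pi * XX c r t)))" for t
  proof -
    have x2: "XX c r t ^ 2 = r^2 - YY c r t ^ 2" using XY_sq[of c r t] by simp
    have "XX c r t ^ (a+1) * (real (b+1) * YY c r t ^ (b+1 - 1) * (- (pi * XX c r t)))
       = - real (b+1) * pi * XX c r t ^ a * XX c r t ^ 2 * YY c r t ^ b"
      by (simp add: power2_eq_square algebra_simps)
    also have "\<dots> = - real (b+1) * pi * XX c r t ^ a * (r^2 - YY c r t ^ 2) * YY c r t ^ b"
      by (simp add: x2)
    finally show ?thesis by (simp add: power2_eq_square algebra_simps)
  qed
  have h2: "((\<lambda>t. real (a+b+2) * (pi * XX c r t ^ a * YY c r t ^ (b+2)) - real (b+1) * r^2 * (pi * XX c r t ^ a * YY c r t ^ b))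
     has_integral (XX c r 1 ^ (a+1) * YY c r 1 ^ (b+1) - XX c r 0 ^ (a+1) * YY c r 0 ^ (b+1))) {0..1}"
    using ftc_XY[of "a+1" c r "b+1"] by (simp only: eq)
  show ?thesis using has_integral_unique[OF h1 h2] .
qed

lemma FT:
  assumes "\<And>t. f t = real p * XX c r t ^ (p - 1) * (pi * YY c r t) * YY c r t ^ q
    + XX c r t ^ p * (real q * YY c r t ^ (q - 1) * (- (pi * XX c r t)))"
  shows "(f has_integral (XX c r 1 ^ p * YY c r 1 ^ q - XX c r 0 ^ p * YY c r 0 ^ q)) {0..1}"
proof -
  have "f = (\<lambda>t. real p * XX c r t ^ (p - 1) * (pi * YY c r t) * YY c r t ^ q
    + XX c r t ^ p * (real q * YY c r t ^ (q - 1) * (- (pi * XX c r t))))"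
    using assms by (rule ext)
  then show ?thesis using ftc_XY by simp
qed

lemma R2: "real (a+1) * UU c r a 1 = XX c r 1 ^ (a+1) - XX c r 0 ^ (a+1)"
proof -
  have h1: "((\<lambda>t. real (a+1) * (pi * XX c r t ^ a * YY c r t ^ 1)) has_integral (real (a+1) * UU c r a 1)) {0..1}"
    by (intro has_integral_mult_right UU_has)
  have h2: "((\<lambda>t. real (a+1) * (pi * XX c r t ^ a * YY c r t ^ 1)) has_integral
     (XX c r 1 ^ (a+1) * YY c r 1 ^ 0 - XX c r 0 ^ (a+1) * YY c r 0 ^ 0)) {0..1}"
    by (rule FT) (simp add: algebra_simps)
  show ?thesis using has_integral_unique[OF h1 h2] by simp
qed

lemma R3: "real (a+2) * UU c r (a+2) 0 = real (a+1) * r^2 * UU c r a 0 - (XX c r 1 ^ (a+1) * YY c r 1 - XX c r 0 ^ (a+1) * YY c r 0)"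
proof -
  have h1: "((\<lambda>t. real (a+1) * r^2 * (pi * XX c r t ^ a * YY c r t ^ 0) - real (a+2) * (pi * XX c r t ^ (a+2) * YY c r t ^ 0))
     has_integral (real (a+1) * r^2 * UU c r a 0 - real (a+2) * UU c r (a+2) 0)) {0..1}"
    by (intro has_integral_diff has_integral_mult_right UU_has)
  have h2: "((\<lambda>t. real (a+1) * r^2 * (pi * XX c r t ^ a * YY c r t ^ 0) - real (a+2) * (pi * XX c r t ^ (a+2) * YY c r t ^ 0))
     has_integral (XX c r 1 ^ (a+1) * YY c r 1 ^ 1 - XX c r 0 ^ (a+1) * YY c r 0 ^ 1)) {0..1}"
  proof (rule FT)
    fix t
    have y2: "YY c r t ^ 2 = r^2 - XX c r t ^ 2" using XY_sq[of c r t] by simp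
    have "real (a + 1) * XX c r t ^ (a + 1 - 1) * (pi * YY c r t) * YY c r t ^ 1
       = real (a+1) * pi * XX c r t ^ a * YY c r t ^ 2" by (simp add: power2_eq_square)
    also have "\<dots> = real (a+1) * pi * XX c r t ^ a * (r^2 - XX c r t ^ 2)" by (simp add: y2)
    finally show "real (a+1) * r^2 * (pi * XX c r t ^ a * YY c r t ^ 0) - real (a+2) * (pi * XX c r t ^ (a+2) * YY c r t ^ 0) =
      real (a + 1) * XX c r t ^ (a + 1 - 1) * (pi * YY c r t) * YY c r t ^ 1 +
      XX c r t ^ (a + 1) * (real 1 * YY c r t ^ (1 - 1) * - (pi * XX c r t))"
      by (simp add: power2_eq_square algebra_simps)
  qed
  show ?thesis using has_integral_unique[OF h1 h2] by simp
qed

lemma R4: "UU c r 1 0 = - (YY c r 1 - YY c r 0)"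
proof -
  have h1: "((\<lambda>t. - (pi * XX c r t ^ 1 * YY c r t ^ 0)) has_integral (- UU c r 1 0)) {0..1}"
    by (intro has_integral_neg UU_has)
  have h2: "((\<lambda>t. - (pi * XX c r t ^ 1 * YY c r t ^ 0)) has_integral
     (XX c r 1 ^ 0 * YY c r 1 ^ 1 - XX c r 0 ^ 0 * YY c r 0 ^ 1)) {0..1}"
    by (rule FT) simp
  show ?thesis using has_integral_unique[OF h1 h2] by simp
qed

lemma U00: "UU c r 0 0 = pi"
  unfolding UU_def by simp

lemma X0: "XX c r 0 = - XX c r 1" and Y0: "YY c r 0 = - YY c r 1"
  unfolding XX_def YY_def by simp_all


definition Bq :: "real \<Rightarrow> nat \<Rightarrow> nat \<Rightarrow> real poly" where
  "Bq e p q = (if even (p+q) then 0 else monom (2 * e^(p+q)) (p + 3*q))"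

lemma Bq_deg: "degree (Bq e p q) \<le> p + 3*q"
  unfolding Bq_def by (simp add: degree_monom_le)

lemma Bd:
  assumes "XX c r 1 = e * s" "YY c r 1 = e * s^3"
  shows "XX c r 1 ^ p * YY c r 1 ^ q - XX c r 0 ^ p * YY c r 0 ^ q = poly (Bq e p q) s"
proof -
  have m: "XX c r 0 ^ p * YY c r 0 ^ q = (-1)^p * (-1)^q * (XX c r 1 ^ p * YY c r 1 ^ q)"
    by (simp only: X0 Y0 power_minus[of "XX c r 1"] power_minus[of "YY c r 1"] mult_ac)
  have m2: "(-1::real)^p * (-1)^q = (-1)^(p+q)" by (simp only: power_add)
  have A: "XX c r 1 ^ p * YY c r 1 ^ q = e^(p+q) * s^(p+3*q)"
  proof -
    have "XX c r 1 ^ p * YY c r 1 ^ q = (e^p * e^q) * (s^p * (s^3)^q)"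
      using assms by (simp only: power_mult_distrib mult_ac)
    also have "\<dots> = e^(p+q) * s^(p+3*q)" by (simp only: power_add power_mult)
    finally show ?thesis .
  qed
  show ?thesis
  proof (cases "even (p+q)")
    case True
    then show ?thesis unfolding Bq_def m m2 by simp
  next
    case False
    then have "(-1::real)^(p+q) = -1" by simp
    then show ?thesis unfolding Bq_def m m2 A using False by (simp add: poly_monom)
  qed
qed

definition hp :: "real poly" where "hp = monom 1 2 + monom 1 6"

lemma hp_poly: "poly hp s = s^2 + s^6"
  unfolding hp_def by (simp add: poly_monom)

lemma hp_deg: "degree hp \<le> 6"
  unfolding hp_def by (intro degree_add_le) (auto intro: order.trans[OF degree_monom_le])

definition Good :: "real \<Rightarrow> nat \<Rightarrow> nat \<Rightarrow> real \<Rightarrow> real poly \<Rightarrow> bool" where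
  "Good e a b \<kappa> Q \<longleftrightarrow> degree Q \<le> 3*(a+b) \<and> (odd (a+b) \<longrightarrow> \<kappa> = 0) \<and> (even (a+b) \<longrightarrow> Q = 0) \<and>
     (\<forall>c r s. r^2 = s^2+s^6 \<and> XX c r 1 = e * s \<and> YY c r 1 = e * s^3 \<longrightarrow> UU c r a b = \<kappa>*pi*r^(a+b) + poly Q s)"


lemma comb:
  assumes G: "Good e a b \<kappa>' Q'"
    and rel: "\<And>c r. k0 * UU c r a' b' = k1 * r^2 * UU c r a b
          + \<sigma> * (XX c r 1 ^ p * YY c r 1 ^ q - XX c r 0 ^ p * YY c r 0 ^ q)"
    and k0: "k0 \<noteq> 0" and s1: "a' + b' = a + b + 2" and s2: "p + q = a + b + 2"
  shows "Good e a' b' (k1*\<kappa>'/k0) (smult (k1/k0) (hp*Q') + smult (\<sigma>/k0) (Bq e p q))"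
proof -
  have dQ: "degree Q' \<le> 3*(a+b)" and oQ: "odd (a+b) \<Longrightarrow> \<kappa>' = 0" and eQ: "even (a+b) \<Longrightarrow> Q' = 0"
    and UQ: "\<And>c r s. r^2 = s^2+s^6 \<Longrightarrow> XX c r 1 = e * s \<Longrightarrow> YY c r 1 = e * s^3 \<Longrightarrow> UU c r a b = \<kappa>'*pi*r^(a+b) + poly Q' s"
    using G unfolding Good_def by auto
  have d1: "degree (smult (k1/k0) (hp*Q')) \<le> 3*(a'+b')"
  proof -
    have "degree (smult (k1/k0) (hp*Q')) \<le> degree (hp*Q')" by (rule degree_smult_le)
    also have "\<dots> \<le> degree hp + degree Q'" by (rule degree_mult_le)
    also have "\<dots> \<le> 6 + 3*(a+b)" using hp_deg dQ by simp
    finally show ?thesis using s1 by simp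
  qed
  have d2: "degree (smult (\<sigma>/k0) (Bq e p q)) \<le> 3*(a'+b')"
  proof -
    have "degree (smult (\<sigma>/k0) (Bq e p q)) \<le> degree (Bq e p q)" by (rule degree_smult_le)
    also have "\<dots> \<le> p + 3*q" by (rule Bq_deg)
    finally show ?thesis using s1 s2 by simp
  qed
  show ?thesis unfolding Good_def
  proof (intro conjI allI impI)
    show "degree (smult (k1/k0) (hp*Q') + smult (\<sigma>/k0) (Bq e p q)) \<le> 3*(a'+b')"
      using d1 d2 by (rule degree_add_le)
  next
    assume "odd (a'+b')" then show "k1*\<kappa>'/k0 = 0" using oQ s1 by simp
  next
    assume ev: "even (a'+b')"
    then have "Q' = 0" using eQ s1 by simp
    moreover have "Bq e p q = 0" using ev s1 s2 unfolding Bq_def by simp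
    ultimately show "smult (k1/k0) (hp*Q') + smult (\<sigma>/k0) (Bq e p q) = 0" by simp
  next
    fix c r s assume H: "r^2 = s^2+s^6 \<and> XX c r 1 = e * s \<and> YY c r 1 = e * s^3"
    have U1: "UU c r a b = \<kappa>'*pi*r^(a+b) + poly Q' s" using UQ H by blast
    have B1: "XX c r 1 ^ p * YY c r 1 ^ q - XX c r 0 ^ p * YY c r 0 ^ q = poly (Bq e p q) s"
      using Bd H by blast
    have "UU c r a' b' = (k1 * r^2 * UU c r a b + \<sigma> * poly (Bq e p q) s) / k0"
      using rel[of c r] k0 B1 by (simp add: field_simps)
    also have "\<dots> = k1*\<kappa>'/k0*pi*r^(a'+b') + poly (smult (k1/k0) (hp*Q') + smult (\<sigma>/k0) (Bq e p q)) s"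
    proof -
      have r2: "poly hp s = r^2" using H by (simp add: hp_poly)
      show ?thesis unfolding U1 s1 poly_add poly_smult poly_mult r2 using k0
        by (simp add: field_simps power_add power2_eq_square)
    qed
    finally show "UU c r a' b' = k1*\<kappa>'/k0*pi*r^(a'+b') + poly (smult (k1/k0) (hp*Q') + smult (\<sigma>/k0) (Bq e p q)) s" .
  qed
qed

lemma good00: "Good e 0 0 1 0"
  unfolding Good_def by (simp add: U00)

lemma good10: "Good e 1 0 0 (smult (-1) (Bq e 0 1))"
  unfolding Good_def
proof (intro conjI allI impI)
  show "degree (smult (-1) (Bq e 0 1)) \<le> 3 * (1 + 0)"
    using Bq_deg[of e 0 1] degree_smult_le[of "-1" "Bq e 0 1"] by simp
next
  fix c r s assume H: "r^2 = s^2+s^6 \<and> XX c r 1 = e * s \<and> YY c r 1 = e * s^3"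
  have "XX c r 1 ^ 0 * YY c r 1 ^ 1 - XX c r 0 ^ 0 * YY c r 0 ^ 1 = poly (Bq e 0 1) s"
    using Bd H by blast
  then show "UU c r 1 0 = 0 * pi * r ^ (1 + 0) + poly (smult (-1) (Bq e 0 1)) s"
    using R4[of c r] by simp
qed auto

lemma gooda1: "Good e a 1 0 (smult (1/real (a+1)) (Bq e (a+1) 0))"
  unfolding Good_def
proof (intro conjI allI impI)
  show "degree (smult (1/real (a+1)) (Bq e (a+1) 0)) \<le> 3 * (a + 1)"
    using Bq_deg[of e "a+1" 0] degree_smult_le[of "1/real (a+1)" "Bq e (a+1) 0"] by simp
next
  assume "even (a+1)" then show "smult (1/real (a+1)) (Bq e (a+1) 0) = 0"
    unfolding Bq_def by simp
next
  fix c r s assume H: "r^2 = s^2+s^6 \<and> XX c r 1 = e * s \<and> YY c r 1 = e * s^3"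
  have "XX c r 1 ^ (a+1) * YY c r 1 ^ 0 - XX c r 0 ^ (a+1) * YY c r 0 ^ 0 = poly (Bq e (a+1) 0) s"
    using Bd H by blast
  then show "UU c r a 1 = 0 * pi * r ^ (a + 1) + poly (smult (1/real (a+1)) (Bq e (a+1) 0)) s"
    using R2[of a c r] by (simp add: field_simps)
qed auto

lemma good_b0: "\<exists>\<kappa> Q. Good e a 0 \<kappa> Q"
proof (induction a rule: less_induct)
  case (less a)
  show ?case
  proof (cases a)
    case 0 then show ?thesis using good00 by blast
  next
    case (Suc a1)
    show ?thesis
    proof (cases a1)
      case 0 then have "a = 1" using Suc by simp
      then show ?thesis using good10 by blast
    next
      case (Suc a')
      then have aa: "a = a' + 2" using \<open>a = Suc a1\<close> by simp
      obtain \<kappa>' Q' where G: "Good e a' 0 \<kappa>' Q'" using less.IH[of a'] aa by auto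
      have "Good e (a'+2) 0 (real (a'+1)*\<kappa>'/real (a'+2))
         (smult (real (a'+1)/real (a'+2)) (hp*Q') + smult ((-1)/real (a'+2)) (Bq e (a'+1) 1))"
      proof (rule comb[OF G])
        fix c r show "real (a'+2) * UU c r (a'+2) 0 = real (a'+1) * r^2 * UU c r a' 0
          + (-1) * (XX c r 1 ^ (a'+1) * YY c r 1 ^ 1 - XX c r 0 ^ (a'+1) * YY c r 0 ^ 1)"
          using R3[of a' c r] by simp
      qed auto
      then show ?thesis using aa by blast
    qed
  qed
qed

lemma good_all: "\<exists>\<kappa> Q. Good e a b \<kappa> Q"
proof (induction b arbitrary: a rule: less_induct)
  case (less b)
  show ?case
  proof (cases b)
    case 0 then show ?thesis using good_b0 by blast
  next
    case (Suc b1)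
    show ?thesis
    proof (cases b1)
      case 0 then have "b = 1" using Suc by simp
      then show ?thesis using gooda1 by blast
    next
      case (Suc b')
      then have bb: "b = b' + 2" using \<open>b = Suc b1\<close> by simp
      obtain \<kappa>' Q' where G: "Good e a b' \<kappa>' Q'" using less.IH[of b' a] bb by auto
      have "Good e a (b'+2) (real (b'+1)*\<kappa>'/real (a+b'+2))
         (smult (real (b'+1)/real (a+b'+2)) (hp*Q') + smult (1/real (a+b'+2)) (Bq e (a+1) (b'+1)))"
      proof (rule comb[OF G])
        fix c r show "real (a+b'+2) * UU c r a (b'+2) = real (b'+1) * r^2 * UU c r a b'
          + 1 * (XX c r 1 ^ (a+1) * YY c r 1 ^ (b'+1) - XX c r 0 ^ (a+1) * YY c r 0 ^ (b'+1))"
          using R1[of a b' c r] by simp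
      qed auto
      then show ?thesis using bb by blast
    qed
  qed
qed

lemma sigma_prop:
  assumes h: "0 < h"
  shows "sigma h > 0 \<and> (sigma h)^2 + (sigma h)^6 = h"
proof -
  let ?f = "\<lambda>s::real. s^2 + s^6"
  have "\<exists>x. 0 \<le> x \<and> x \<le> 1 + h \<and> ?f x = h"
  proof (rule IVT')
    show "?f 0 \<le> h" using h by simp
    have e2: "(1+h)^2 = 1 + 2*h + h*h" by (simp add: power2_eq_square algebra_simps)
    have "0 \<le> h*h" by simp
    then have "h \<le> (1+h)^2" unfolding e2 using h by linarith
    moreover have "0 \<le> (1+h)^6" using h by (intro zero_le_power) linarith
    ultimately show "h \<le> ?f (1+h)" by linarith
    show "0 \<le> 1 + h" using h by simp
    show "continuous_on {0..1+h} ?f" by (intro continuous_intros)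
  qed
  then obtain x where x: "0 \<le> x" "?f x = h" by blast
  have "x \<noteq> 0" using x(2) h by auto
  then have xpos: "x > 0" using x(1) by linarith
  have uniq: "y = x" if "y > 0" "?f y = h" for y
  proof (rule ccontr)
    assume "y \<noteq> x"
    then have "y < x \<or> x < y" by linarith
    then show False
    proof
      assume "y < x"
      then have "y^2 < x^2" "y^6 < x^6" using that(1) power_strict_mono[of y x 2] power_strict_mono[of y x 6] by simp_all
      then show False using x that by linarith
    next
      assume "x < y"
      then have "x^2 < y^2" "x^6 < y^6" using xpos power_strict_mono[of x y 2] power_strict_mono[of x y 6] by simp_all
      then show False using x that by linarith
    qed
  qed
  have "sigma h = x" unfolding sigma_def
  proof (rule the_equality)
    show "0 < x \<and> x^2 + x^6 = h" using xpos x by simp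
    show "\<And>y. 0 < y \<and> y^2 + y^6 = h \<Longrightarrow> y = x" using uniq by blast
  qed
  then show ?thesis using xpos x by simp
qed


lemma endpts:
  assumes s: "s > 0"
  shows "sqrt (s^2+s^6) * cos (arctan (s^2)) = s" "sqrt (s^2+s^6) * sin (arctan (s^2)) = s^3"
proof -
  have q: "sqrt (s^2+s^6) = s * sqrt (1 + (s^2)^2)"
  proof -
    have "s^2+s^6 = s^2 * (1 + (s^2)^2)" by (simp add: distrib_left flip: power_add power_mult)
    then have "sqrt (s^2+s^6) = sqrt (s^2) * sqrt (1 + (s^2)^2)" by (simp add: real_sqrt_mult)
    then show ?thesis using s by simp
  qed
  have pos: "sqrt (1 + (s^2)^2) > 0" by (simp add: add_pos_nonneg)
  show "sqrt (s^2+s^6) * cos (arctan (s^2)) = s" unfolding q cos_arctan using pos by simp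
  show "sqrt (s^2+s^6) * sin (arctan (s^2)) = s^3" unfolding q sin_arctan using pos
    by (simp add: power2_eq_square power3_eq_cube)
qed

lemma Lplus_eq: "Lplus h = (\<lambda>t. (XX (pi + angB h) (sqrt h) t, YY (pi + angB h) (sqrt h) t))"
  unfolding Lplus_def XX_def YY_def ..

lemma Lminus_eq: "Lminus h = (\<lambda>t. (XX (angB h) (sqrt h) t, YY (angB h) (sqrt h) t))"
  unfolding Lminus_def XX_def YY_def ..

lemma endp_plus:
  assumes "0 < h"
  shows "XX (pi + angB h) (sqrt h) 1 = 1 * sigma h" "YY (pi + angB h) (sqrt h) 1 = 1 * sigma h ^ 3"
    "(sqrt h)^2 = (sigma h)^2 + (sigma h)^6"
  using sigma_prop[OF assms] endpts[of "sigma h"] assms by (simp_all add: XX_def YY_def angB_def)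

lemma endp_minus:
  assumes "0 < h"
  shows "XX (angB h) (sqrt h) 1 = -1 * sigma h" "YY (angB h) (sqrt h) 1 = -1 * sigma h ^ 3"
  using sigma_prop[OF assms] endpts[of "sigma h"] assms by (simp_all add: XX_def YY_def angB_def)

lemma vd: "vector_derivative (\<lambda>t. (XX c r t, YY c r t)) (at t) = (pi * YY c r t, - (pi * XX c r t))"
  apply (intro vector_derivative_at has_vector_derivative_Pair)
  using dXX dYY has_real_derivative_iff_has_vector_derivative by blast+

lemma int_XY2: "(\<lambda>t. k * (m * XX c r t ^ a * YY c r t ^ b)) integrable_on {0..1}"
  by (rule integrable_continuous_real) (unfold XX_def YY_def, intro continuous_intros)

abbreviation SS :: "nat \<Rightarrow> (nat \<times> nat) set" where "SS n \<equiv> {(i,j). i + j \<le> n}"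

lemma SS_fin: "finite (SS n)"
  by (rule finite_subset[of _ "{0..n} \<times> {0..n}"]) auto

lemma lint:
  "line_int (bipoly n q) (\<lambda>x y. - bipoly n p x y) (\<lambda>t. (XX c r t, YY c r t))
   = (\<Sum>(i,j)\<in>SS n. q i j * UU c r i (Suc j) + p i j * UU c r (Suc i) j)"
proof -
  have pt: "bipoly n q (XX c r t) (YY c r t) * (pi * YY c r t) + - bipoly n p (XX c r t) (YY c r t) * - (pi * XX c r t)
     = (\<Sum>(i,j)\<in>SS n. q i j * (pi * XX c r t ^ i * YY c r t ^ Suc j) + p i j * (pi * XX c r t ^ Suc i * YY c r t ^ j))" for t
    unfolding bipoly_def sum.distrib
    by (simp add: sum_distrib_right sum_distrib_left sum.distrib split_def mult_ac sum_negf)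
  have "line_int (bipoly n q) (\<lambda>x y. - bipoly n p x y) (\<lambda>t. (XX c r t, YY c r t))
    = integral {0..1} (\<lambda>t. \<Sum>(i,j)\<in>SS n. q i j * (pi * XX c r t ^ i * YY c r t ^ Suc j) + p i j * (pi * XX c r t ^ Suc i * YY c r t ^ j))"
    unfolding line_int_def vd by (simp only: fst_conv snd_conv pt)
  also have "\<dots> = (\<Sum>ij\<in>SS n. integral {0..1} (\<lambda>t. q (fst ij) (snd ij) * (pi * XX c r t ^ fst ij * YY c r t ^ Suc (snd ij)) + p (fst ij) (snd ij) * (pi * XX c r t ^ Suc (fst ij) * YY c r t ^ (snd ij))))"
    unfolding split_def
    apply (rule integral_sum)
    subgoal using SS_fin by (simp add: split_def)
    subgoal by (intro integrable_add int_XY2)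
    done
  also have "\<dots> = (\<Sum>(i,j)\<in>SS n. q i j * UU c r i (Suc j) + p i j * UU c r (Suc i) j)"
    unfolding split_def UU_def
    apply (intro sum.cong refl)
    apply (subst integral_add[OF int_XY2 int_XY2])
    apply (simp only: integral_mult_right)
    done
  finally show ?thesis .
qed

lemma J01: "J 0 1 h = pi * (sqrt h)^2 / 2"
proof -
  have "J 0 1 h = UU (pi + angB h) (sqrt h) 0 2"
    unfolding J_def line_int_def Lplus_eq vd UU_def by (simp add: power2_eq_square mult_ac)
  also have "\<dots> = pi * (sqrt h)^2 / 2"
    using R1[of 0 0 "pi + angB h" "sqrt h"] by (simp add: X0 Y0 U00 numeral_2_eq_2 mult.commute)
  finally show ?thesis .
qed

lemma good_fun: "\<exists>K Q. \<forall>a b. Good e a b (K a b) (Q a b)"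
proof -
  define K where "K a b = (SOME k. \<exists>Q. Good e a b k Q)" for a b
  define Q where "Q a b = (SOME Q. Good e a b (K a b) Q)" for a b
  have "Good e a b (K a b) (Q a b)" for a b
  proof -
    have "\<exists>Q. Good e a b (K a b) Q" unfolding K_def using good_all[of e a b] by (rule someI_ex)
    then show ?thesis unfolding Q_def by (rule someI_ex)
  qed
  then show ?thesis by blast
qed

definition G :: "real \<Rightarrow> nat \<Rightarrow> real poly" where
  "G k d = (if even d then monom (2*k) (d div 2 - 1) else 0)"

lemma G_deg: "degree (G k d) \<le> d div 2 - 1"
  unfolding G_def by (simp add: degree_monom_le)

lemma G_eq:
  assumes h: "0 < h" and d: "1 \<le> d" and o: "odd d \<Longrightarrow> k = 0"
  shows "k * pi * (sqrt h)^d = poly (G k d) h * (pi * (sqrt h)^2 / 2)"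
proof (cases "even d")
  case True
  then obtain m where m: "d = 2*m" by blast
  with d have m1: "m \<ge> 1" by simp
  have sq: "(sqrt h)^d = h^m" unfolding m power_mult using h by simp
  have hm: "h^m = h^(m-1) * h" using m1 by (simp add: power_eq_if)
  show ?thesis using True h unfolding G_def sq by (simp add: poly_monom m hm)
next
  case False
  then show ?thesis using o unfolding G_def by simp
qed

lemma degQ:
  assumes "Good e a b k Q" "a + b \<le> n + 1"
  shows "degree Q \<le> 3*n + (if even n then 3 else 2)"
proof (cases "even (a+b)")
  case True then show ?thesis using assms unfolding Good_def by simp
next
  case False
  have "odd n \<Longrightarrow> a + b \<noteq> n + 1"
  proof
    assume "odd n" "a + b = n + 1"
    then have "even (a+b)" by simp
    then show False using False by simp
  qed
  then have "a + b \<le> n + (if even n then 1 else 0)" using assms(2) by (cases "even n") auto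
  then show ?thesis using assms unfolding Good_def by (cases "even n") auto
qed

lemma deg_sm: "degree p \<le> k \<Longrightarrow> degree (smult c p) \<le> k"
  using degree_smult_le order.trans by blast

lemma sign_div: "((5::int) + (-1) ^ n) div 2 = (if even n then 3 else 2)"
  by (cases "even n") simp_all

theorem lemma3p3:
  fixes n :: nat
    and ap am bp bm :: "nat \<Rightarrow> nat \<Rightarrow> real"
  assumes "n \<ge> 1"
  shows "\<exists>\<alpha> \<beta> \<gamma> :: real poly. \<exists>\<Psi> :: nat \<Rightarrow> nat \<Rightarrow> real poly. \<exists>\<Phi> :: real poly.
    deg_le \<alpha> (int (n div 2)) \<and> deg_le \<gamma> (int (n div 2)) \<and> deg_le \<beta> (int (n div 2) - 1) \<and>
    (\<forall>k m. 2 \<le> k \<and> k \<le> n \<and> m \<le> 3 * (k div 2) - 3 \<longrightarrow>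
        deg_le (\<Psi> k m) (int (k div 2) - 1 - int ((m + 2) div 3))) \<and>
    deg_le \<Phi> (int (3 * n) + (5 + (-1) ^ n) div 2) \<and>
    (\<forall>h. 0 < h \<longrightarrow>
      melnikov (bipoly n ap) (bipoly n bp) (bipoly n am) (bipoly n bm) h =
        poly \<alpha> h * J 0 0 h + poly \<beta> h * J 1 1 h + poly \<gamma> h * J 0 1 h
        + (\<Sum>k=2..n. \<Sum>m=0..3 * (k div 2) - 3. poly (\<Psi> k m) h * sigma h ^ (7 + 2 * m))
        + poly \<Phi> (sigma h))"
proof -
  obtain Kp Qp where GP: "\<And>a b. Good 1 a b (Kp a b) (Qp a b)" using good_fun[of 1] by blast
  obtain Km Qm where GM: "\<And>a b. Good (-1) a b (Km a b) (Qm a b)" using good_fun[of "-1"] by blast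
  define gam where "gam = (\<lambda>(i,j). smult (bp i j) (G (Kp i (Suc j)) (Suc (i+j)))
      + smult (ap i j) (G (Kp (Suc i) j) (Suc (i+j)))
      + smult (bm i j) (G (Km i (Suc j)) (Suc (i+j)))
      + smult (am i j) (G (Km (Suc i) j) (Suc (i+j))))"
  define phi where "phi = (\<lambda>(i,j). smult (bp i j) (Qp i (Suc j)) + smult (ap i j) (Qp (Suc i) j)
      + smult (bm i j) (Qm i (Suc j)) + smult (am i j) (Qm (Suc i) j))"
  define \<gamma> where "\<gamma> = (\<Sum>ij\<in>SS n. gam ij)"
  define \<Phi> where "\<Phi> = (\<Sum>ij\<in>SS n. phi ij)"
  define N where "N = 3*n + (if even n then 3 else 2)"
  have dg: "degree \<gamma> \<le> n div 2"
    unfolding \<gamma>_def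
  proof (rule degree_sum_le[OF SS_fin])
    fix ij assume "ij \<in> SS n"
    then obtain i j where ij: "ij = (i,j)" "i + j \<le> n" by auto
    have b: "Suc (i+j) div 2 - 1 \<le> n div 2" using ij(2) by linarith
    have gd: "degree (G k (Suc (i+j))) \<le> n div 2" for k using G_deg[of k "Suc (i+j)"] b by linarith
    show "degree (gam ij) \<le> n div 2" unfolding ij gam_def
      by (simp del: add_Suc add_Suc_right) (intro degree_add_le deg_sm gd)
  qed
  have dp: "degree \<Phi> \<le> N"
    unfolding \<Phi>_def
  proof (rule degree_sum_le[OF SS_fin])
    fix ij assume "ij \<in> SS n"
    then obtain i j where ij: "ij = (i,j)" "i + j \<le> n" by auto
    have q1: "degree (Qp i (Suc j)) \<le> N" "degree (Qp (Suc i) j) \<le> N"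
      "degree (Qm i (Suc j)) \<le> N" "degree (Qm (Suc i) j) \<le> N"
      unfolding N_def using degQ[OF GP, of i "Suc j" n] degQ[OF GP, of "Suc i" j n]
        degQ[OF GM, of i "Suc j" n] degQ[OF GM, of "Suc i" j n] ij(2) by auto
    show "degree (phi ij) \<le> N" unfolding ij phi_def
      by simp (intro degree_add_le deg_sm q1)
  qed
  have eq: "melnikov (bipoly n ap) (bipoly n bp) (bipoly n am) (bipoly n bm) h =
        poly \<gamma> h * J 0 1 h + poly \<Phi> (sigma h)" if h: "0 < h" for h
  proof -
    let ?s = "sigma h" and ?r = "sqrt h"
    let ?cp = "pi + angB h" and ?cm = "angB h"
    have r2: "?r^2 = ?s^2 + ?s^6" using endp_plus(3)[OF h] .
    have Up: "UU ?cp ?r a b = Kp a b * pi * ?r^(a+b) + poly (Qp a b) ?s" for a b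
      using GP[of a b] endp_plus[OF h] r2 unfolding Good_def by blast
    have Um: "UU ?cm ?r a b = Km a b * pi * ?r^(a+b) + poly (Qm a b) ?s" for a b
      using GM[of a b] endp_minus[OF h] r2 unfolding Good_def by blast
    have Gp: "Kp a b * pi * ?r^(a+b) = poly (G (Kp a b) (a+b)) h * J 0 1 h" if "1 \<le> a + b" for a b
      unfolding J01 by (rule G_eq[OF h that]) (use GP[of a b] in \<open>simp add: Good_def\<close>)
    have Gm: "Km a b * pi * ?r^(a+b) = poly (G (Km a b) (a+b)) h * J 0 1 h" if "1 \<le> a + b" for a b
      unfolding J01 by (rule G_eq[OF h that]) (use GM[of a b] in \<open>simp add: Good_def\<close>)
    have M: "melnikov (bipoly n ap) (bipoly n bp) (bipoly n am) (bipoly n bm) h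
      = (\<Sum>(i,j)\<in>SS n. bp i j * UU ?cp ?r i (Suc j) + ap i j * UU ?cp ?r (Suc i) j)
      + (\<Sum>(i,j)\<in>SS n. bm i j * UU ?cm ?r i (Suc j) + am i j * UU ?cm ?r (Suc i) j)"
      unfolding melnikov_def Lplus_eq Lminus_eq lint ..
    also have "\<dots> = (\<Sum>ij\<in>SS n. poly (gam ij) h * J 0 1 h + poly (phi ij) ?s)"
      unfolding sum.distrib[symmetric]
    proof (rule sum.cong[OF refl])
      fix ij assume "ij \<in> SS n"
      obtain i j where ij: "ij = (i,j)" by force
      have e1: "i + Suc j = Suc (i+j)" "Suc i + j = Suc (i+j)" by simp_all
      have A: "UU ?cp ?r i (Suc j) = poly (G (Kp i (Suc j)) (Suc (i+j))) h * J 0 1 h + poly (Qp i (Suc j)) ?s"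
        using Up[of i "Suc j"] Gp[of i "Suc j"] unfolding e1 by simp
      have B: "UU ?cp ?r (Suc i) j = poly (G (Kp (Suc i) j) (Suc (i+j))) h * J 0 1 h + poly (Qp (Suc i) j) ?s"
        using Up[of "Suc i" j] Gp[of "Suc i" j] unfolding e1 by simp
      have C: "UU ?cm ?r i (Suc j) = poly (G (Km i (Suc j)) (Suc (i+j))) h * J 0 1 h + poly (Qm i (Suc j)) ?s"
        using Um[of i "Suc j"] Gm[of i "Suc j"] unfolding e1 by simp
      have D: "UU ?cm ?r (Suc i) j = poly (G (Km (Suc i) j) (Suc (i+j))) h * J 0 1 h + poly (Qm (Suc i) j) ?s"
        using Um[of "Suc i" j] Gm[of "Suc i" j] unfolding e1 by simp
      show "(case ij of (i,j) \<Rightarrow> bp i j * UU ?cp ?r i (Suc j) + ap i j * UU ?cp ?r (Suc i) j)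
         + (case ij of (i,j) \<Rightarrow> bm i j * UU ?cm ?r i (Suc j) + am i j * UU ?cm ?r (Suc i) j)
         = poly (gam ij) h * J 0 1 h + poly (phi ij) ?s"
        unfolding ij gam_def phi_def split A B C D
        by (simp del: add_Suc add_Suc_right add: algebra_simps)
    qed
    also have "\<dots> = poly \<gamma> h * J 0 1 h + poly \<Phi> ?s"
      unfolding \<gamma>_def \<Phi>_def poly_sum sum.distrib sum_distrib_right ..
    finally show ?thesis .
  qed
  show ?thesis
  proof (intro exI conjI allI impI)
    show "deg_le 0 (int (n div 2))" unfolding deg_le_def by simp
    show "deg_le \<gamma> (int (n div 2))" unfolding deg_le_def using dg by simp
    show "deg_le 0 (int (n div 2) - 1)" unfolding deg_le_def by simp
    show "deg_le ((\<lambda>k m. 0) k m) (int (k div 2) - 1 - int ((m + 2) div 3))" for k m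
      unfolding deg_le_def by simp
    show "deg_le \<Phi> (int (3 * n) + (5 + (-1) ^ n) div 2)"
      unfolding deg_le_def sign_div using dp unfolding N_def by (cases "even n") simp_all
    fix h :: real assume "0 < h"
    then show "melnikov (bipoly n ap) (bipoly n bp) (bipoly n am) (bipoly n bm) h =
        poly 0 h * J 0 0 h + poly 0 h * J 1 1 h + poly \<gamma> h * J 0 1 h
        + (\<Sum>k=2..n. \<Sum>m=0..3 * (k div 2) - 3. poly ((\<lambda>k m. 0) k m) h * sigma h ^ (7 + 2 * m))
        + poly \<Phi> (sigma h)" using eq by simp
  qed
qed

end
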